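(* The partial derivatives $(\omega_\pm)_x$ and $(\omega_\pm)_y$ are uniformly bounded on $R\setminus\{p_0\}$. For all $(x,y)\in R_\pm\setminus\{p_0\}$, $(\omega_\pm)_x(x,y)\ge 0$, with equality exactly when $y=0$. In any wedge $V_a$ (with $p_0$ removed), $(\omega_\pm)_x>1/120$. Furthermore, for $y\neq0$, $y\,(\omega_+)_y>0$ and $y\,(\omega_-)_y<0$.
   Context: For $x>0$, $y\in\mathbb{R}$ let $r_1^2=4+x^2+4x^2y^2$, $\Delta=((x+2)^2+8x^2y^2)((x-2)^2+8x^2y^2)$ and $$\omega_\pm(x,y)=\frac{x^2-4\pm\sqrt{\Delta}}{2r_1^2}.$$ Let $p_0=(2,0)$, $R=\{(x,y): x>0,\ 4-4y^2-x^2y^2-8x^2y^4\ge 0\}$, $R_+=R\cap((0,2]\times\mathbb{R})$, $R_-=R\cap([2,\infty)\times\mathbb{R})$. For $0<a\le 1/10$ the wedge of height $a$ is $V_a=\{(x,y): |y|\le a,\ |y|\ge|x-2|/10\}$. *)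

theory Defs
  imports "HOL-Analysis.Analysis"
begin

definition r1sq :: "real \<Rightarrow> real \<Rightarrow> real" where
  "r1sq x y = 4 + x^2 + 4 * x^2 * y^2"

definition Delta :: "real \<Rightarrow> real \<Rightarrow> real" where
  "Delta x y = ((x + 2)^2 + 8 * x^2 * y^2) * ((x - 2)^2 + 8 * x^2 * y^2)"

definition omega_p :: "real \<Rightarrow> real \<Rightarrow> real" where
  "omega_p x y = (x^2 - 4 + sqrt (Delta x y)) / (2 * r1sq x y)"

definition omega_m :: "real \<Rightarrow> real \<Rightarrow> real" where
  "omega_m x y = (x^2 - 4 - sqrt (Delta x y)) / (2 * r1sq x y)"

definition partial_x :: "(real \<Rightarrow> real \<Rightarrow> real) \<Rightarrow> real \<Rightarrow> real \<Rightarrow> real" where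
  "partial_x f x y = deriv (\<lambda>t. f t y) x"

definition partial_y :: "(real \<Rightarrow> real \<Rightarrow> real) \<Rightarrow> real \<Rightarrow> real \<Rightarrow> real" where
  "partial_y f x y = deriv (\<lambda>t. f x t) y"

definition p0 :: "real \<times> real" where "p0 = (2, 0)"

definition regR :: "(real \<times> real) set" where
  "regR = {(x, y). x > 0 \<and> 4 - 4*y^2 - x^2*y^2 - 8*x^2*y^4 \<ge> 0}"

definition regR_plus :: "(real \<times> real) set" where
  "regR_plus = regR \<inter> ({0<..2} \<times> UNIV)"

definition regR_minus :: "(real \<times> real) set" where
  "regR_minus = regR \<inter> ({2..} \<times> UNIV)"

definition wedge :: "real \<Rightarrow> (real \<times> real) set" where
  "wedge a = {(x, y). \<bar>y\<bar> \<le> a \<and> \<bar>y\<bar> \<ge> \<bar>x - 2\<bar> / 10}"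

end

theory Submission imports Defs begin

lemma r_pos: "r1sq x y > 0"
  unfolding r1sq_def by (simp add: add_pos_nonneg)

lemma Delta_pos: assumes "x > 0" "(x,y) \<noteq> (2,0)" shows "Delta x y > 0"
proof -
  have a: "(x + 2)^2 + 8 * x^2 * y^2 > 0" using assms(1) by (simp add: add_pos_nonneg)
  have b: "(x - 2)^2 + 8 * x^2 * y^2 > 0"
  proof (cases "y = 0")
    case True then have "x \<noteq> 2" using assms by auto
    then show ?thesis using True by simp
  next
    case False then show ?thesis using assms(1) by (simp add: add_nonneg_pos)
  qed
  show ?thesis unfolding Delta_def using a b by simp
qed

lemma dDx: "((\<lambda>t. Delta t y) has_real_derivative
   ((2*(x+2) + 16*x*y^2) * ((x - 2)^2 + 8 * x^2 * y^2) + ((x + 2)^2 + 8 * x^2 * y^2) * (2*(x-2) + 16*x*y^2))) (at x)"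
  unfolding Delta_def
  by (auto intro!: derivative_eq_intros simp: algebra_simps power2_eq_square)

lemma dDy: "((\<lambda>t. Delta x t) has_real_derivative
   (16*x^2*y * (((x - 2)^2 + 8 * x^2 * y^2) + ((x + 2)^2 + 8 * x^2 * y^2)))) (at y)"
  unfolding Delta_def
  by (auto intro!: derivative_eq_intros simp: algebra_simps power2_eq_square)

lemma drx: "((\<lambda>t. r1sq t y) has_real_derivative (2*x + 8*x*y^2)) (at x)"
  unfolding r1sq_def
  by (auto intro!: derivative_eq_intros simp: algebra_simps power2_eq_square)

lemma dry: "((\<lambda>t. r1sq x t) has_real_derivative (8*x^2*y)) (at y)"
  unfolding r1sq_def
  by (auto intro!: derivative_eq_intros simp: algebra_simps power2_eq_square)

lemma gen_deriv:
  fixes f g h :: "real \<Rightarrow> real"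
  assumes hf: "(f has_real_derivative f') (at z)" and hg: "(g has_real_derivative g') (at z)"
    and hh: "(h has_real_derivative h') (at z)" and gp: "g z > 0" and hp: "h z > 0"
  shows "((\<lambda>t. (f t + c * sqrt (g t)) / (2 * h t)) has_real_derivative
     ((f' + c * (g' / (2 * sqrt (g z)))) * (2 * h z) - (f z + c * sqrt (g z)) * (2 * h')) / (2 * h z)^2) (at z)"
proof -
  have s: "((\<lambda>t. sqrt (g t)) has_real_derivative (inverse (sqrt (g z)) / 2 * g')) (at z)"
    by (rule DERIV_chain2[OF DERIV_real_sqrt[OF gp] hg])
  have e: "inverse (sqrt (g z)) / 2 * g' = g' / (2 * sqrt (g z))" by (simp add: field_simps)
  have n: "((\<lambda>t. f t + c * sqrt (g t)) has_real_derivative (f' + c * (g' / (2 * sqrt (g z))))) (at z)"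
    using DERIV_add[OF hf DERIV_cmult[OF s, of c]] unfolding e by simp
  have d: "((\<lambda>t. 2 * h t) has_real_derivative (2 * h')) (at z)"
    using DERIV_cmult[OF hh, of 2] by simp
  show ?thesis using DERIV_divide[OF n d] hp by (simp add: power2_eq_square)
qed

lemma abs_id:
  fixes u q r z ux qx rx dd :: real
  assumes hs: "z^2 = u^2 + 2*q*r" and s0: "z \<noteq> 0" and r0: "r \<noteq> 0"
    and hD: "dd = 2*u*ux + 2*(qx*r + q*rx)"
  shows "((ux + dd/(2*z)) * (2*r) - (u + z) * (2*rx)) / (2*r)^2
     = - (rx * ((u+z)/(2*r))^2 - ux * ((u+z)/(2*r)) - qx/2) / z"
  using s0 r0 hs unfolding hD
  apply (simp add: field_simps)
  apply algebra
  done

definition ww :: "real \<Rightarrow> real \<Rightarrow> real \<Rightarrow> real" where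
  "ww x y z = (x^2 - 4 + z) / (2 * r1sq x y)"

definition Gx :: "real \<Rightarrow> real \<Rightarrow> real \<Rightarrow> real" where
  "Gx x y z = 2*x*(1 - ww x y z)*((1+4*y^2)*ww x y z + 4*y^2) / z"

definition Gy :: "real \<Rightarrow> real \<Rightarrow> real \<Rightarrow> real" where
  "Gy x y z = 8*x^2*y*(1 - (ww x y z)^2) / z"

lemma Delta_eq: "Delta x y = (x^2-4)^2 + 2*(8*x^2*y^2)*r1sq x y"
  unfolding Delta_def r1sq_def by algebra

lemma c_deriv_x:
  assumes x: "x > 0" "(x,y) \<noteq> (2,0)" and c: "c = 1 \<or> c = -1"
  shows "((\<lambda>t. (t^2 - 4 + c * sqrt (Delta t y)) / (2 * r1sq t y)) has_real_derivative
           Gx x y (c * sqrt (Delta x y))) (at x)"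
proof -
  define S where "S = sqrt (Delta x y)"
  define dd where "dd = (2*(x+2) + 16*x*y^2) * ((x - 2)^2 + 8 * x^2 * y^2) + ((x + 2)^2 + 8 * x^2 * y^2) * (2*(x-2) + 16*x*y^2)"
  have Dp: "Delta x y > 0" using Delta_pos x by blast
  have S0: "S > 0" unfolding S_def using Dp by simp
  have f: "((\<lambda>t. t^2 - 4) has_real_derivative 2*x) (at x)"
    by (auto intro!: derivative_eq_intros)
  have g: "((\<lambda>t. Delta t y) has_real_derivative dd) (at x)" unfolding dd_def by (rule dDx)
  have D1: "((\<lambda>t. (t^2 - 4 + c * sqrt (Delta t y)) / (2 * r1sq t y)) has_real_derivative
     ((2*x + c * (dd / (2 * sqrt (Delta x y)))) * (2 * r1sq x y) - (x^2 - 4 + c * sqrt (Delta x y)) * (2 * (2*x + 8*x*y^2))) / (2 * r1sq x y)^2) (at x)"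
    using gen_deriv[OF f g drx Dp r_pos] by simp
  have cc: "c * (dd / (2 * S)) = dd / (2 * (c*S))" using c by auto
  have zs: "(c*S)^2 = (x^2-4)^2 + 2*(8*x^2*y^2)*r1sq x y"
    using c S0 Dp unfolding S_def by (auto simp: power_mult_distrib Delta_eq)
  have hD: "dd = 2*(x^2-4)*(2*x) + 2*((16*x*y^2)*r1sq x y + (8*x^2*y^2)*(2*x + 8*x*y^2))"
    unfolding dd_def r1sq_def by algebra
  have cz: "c*S \<noteq> 0" using c S0 by auto
  have r0: "r1sq x y \<noteq> 0" using r_pos[of x y] by simp
  have E: "((2*x + dd/(2*(c*S))) * (2*r1sq x y) - ((x^2-4) + c*S) * (2*(2*x + 8*x*y^2))) / (2*r1sq x y)^2
     = - ((2*x + 8*x*y^2) * (((x^2-4)+c*S)/(2*r1sq x y))^2 - (2*x) * (((x^2-4)+c*S)/(2*r1sq x y)) - (16*x*y^2)/2) / (c*S)"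
    by (rule abs_id[OF zs cz r0 hD])
  have E2: "- ((2*x + 8*x*y^2) * (((x^2-4)+c*S)/(2*r1sq x y))^2 - (2*x) * (((x^2-4)+c*S)/(2*r1sq x y)) - (16*x*y^2)/2) / (c*S)
      = Gx x y (c*S)"
    unfolding Gx_def ww_def by (simp add: divide_simps) algebra
  show ?thesis using D1 unfolding S_def[symmetric] cc E E2 by simp
qed

lemma c_deriv_y:
  assumes x: "x > 0" "(x,y) \<noteq> (2,0)" and c: "c = 1 \<or> c = -1"
  shows "((\<lambda>t. (x^2 - 4 + c * sqrt (Delta x t)) / (2 * r1sq x t)) has_real_derivative
           Gy x y (c * sqrt (Delta x y))) (at y)"
proof -
  define S where "S = sqrt (Delta x y)"
  define dd where "dd = 16*x^2*y * (((x - 2)^2 + 8 * x^2 * y^2) + ((x + 2)^2 + 8 * x^2 * y^2))"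
  have Dp: "Delta x y > 0" using Delta_pos x by blast
  have S0: "S > 0" unfolding S_def using Dp by simp
  have f: "((\<lambda>t. x^2 - 4) has_real_derivative 0) (at y)"
    by (auto intro!: derivative_eq_intros)
  have g: "((\<lambda>t. Delta x t) has_real_derivative dd) (at y)" unfolding dd_def by (rule dDy)
  have D1: "((\<lambda>t. (x^2 - 4 + c * sqrt (Delta x t)) / (2 * r1sq x t)) has_real_derivative
     ((0 + c * (dd / (2 * sqrt (Delta x y)))) * (2 * r1sq x y) - (x^2 - 4 + c * sqrt (Delta x y)) * (2 * (8*x^2*y))) / (2 * r1sq x y)^2) (at y)"
    using gen_deriv[OF f g dry Dp r_pos] by simp
  have cc: "c * (dd / (2 * S)) = dd / (2 * (c*S))" using c by auto
  have zs: "(c*S)^2 = (x^2-4)^2 + 2*(8*x^2*y^2)*r1sq x y"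
    using c S0 Dp unfolding S_def by (auto simp: power_mult_distrib Delta_eq)
  have hD: "dd = 2*(x^2-4)*0 + 2*((16*x^2*y)*r1sq x y + (8*x^2*y^2)*(8*x^2*y))"
    unfolding dd_def r1sq_def by algebra
  have cz: "c*S \<noteq> 0" using c S0 by auto
  have r0: "r1sq x y \<noteq> 0" using r_pos[of x y] by simp
  have E: "((0 + dd/(2*(c*S))) * (2*r1sq x y) - ((x^2-4) + c*S) * (2*(8*x^2*y))) / (2*r1sq x y)^2
     = - ((8*x^2*y) * (((x^2-4)+c*S)/(2*r1sq x y))^2 - 0 * (((x^2-4)+c*S)/(2*r1sq x y)) - (16*x^2*y)/2) / (c*S)"
    by (rule abs_id[OF zs cz r0 hD])
  have E2: "- ((8*x^2*y) * (((x^2-4)+c*S)/(2*r1sq x y))^2 - 0 * (((x^2-4)+c*S)/(2*r1sq x y)) - (16*x^2*y)/2) / (c*S)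
      = Gy x y (c*S)"
    unfolding Gy_def ww_def by (simp add: divide_simps) algebra
  show ?thesis using D1 unfolding S_def[symmetric] cc E E2 by simp
qed

lemma px_p: assumes "x > 0" "(x,y) \<noteq> (2,0)"
  shows "partial_x omega_p x y = Gx x y (sqrt (Delta x y))"
proof -
  have e: "(\<lambda>t. omega_p t y) = (\<lambda>t. (t^2 - 4 + 1 * sqrt (Delta t y)) / (2 * r1sq t y))"
    unfolding omega_p_def by simp
  show ?thesis unfolding partial_x_def e using DERIV_imp_deriv[OF c_deriv_x[OF assms, of 1]] by simp
qed

lemma px_m: assumes "x > 0" "(x,y) \<noteq> (2,0)"
  shows "partial_x omega_m x y = Gx x y (- sqrt (Delta x y))"
proof -
  have e: "(\<lambda>t. omega_m t y) = (\<lambda>t. (t^2 - 4 + (-1) * sqrt (Delta t y)) / (2 * r1sq t y))"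
    unfolding omega_m_def by simp
  show ?thesis unfolding partial_x_def e using DERIV_imp_deriv[OF c_deriv_x[OF assms, of "-1"]] by simp
qed

lemma py_p: assumes "x > 0" "(x,y) \<noteq> (2,0)"
  shows "partial_y omega_p x y = Gy x y (sqrt (Delta x y))"
proof -
  have e: "(\<lambda>t. omega_p x t) = (\<lambda>t. (x^2 - 4 + 1 * sqrt (Delta x t)) / (2 * r1sq x t))"
    unfolding omega_p_def by simp
  show ?thesis unfolding partial_y_def e using DERIV_imp_deriv[OF c_deriv_y[OF assms, of 1]] by simp
qed

lemma py_m: assumes "x > 0" "(x,y) \<noteq> (2,0)"
  shows "partial_y omega_m x y = Gy x y (- sqrt (Delta x y))"
proof -
  have e: "(\<lambda>t. omega_m x t) = (\<lambda>t. (x^2 - 4 + (-1) * sqrt (Delta x t)) / (2 * r1sq x t))"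
    unfolding omega_m_def by simp
  show ?thesis unfolding partial_y_def e using DERIV_imp_deriv[OF c_deriv_y[OF assms, of "-1"]] by simp
qed

lemma basic:
  assumes x: "x > 0" "(x,y) \<noteq> (2,0)"
  defines "S \<equiv> sqrt (Delta x y)"
  shows "S > 0" "S^2 = (x^2-4)^2 + 2*(8*x^2*y^2)*r1sq x y" "\<bar>x^2-4\<bar> \<le> S"
    "ww x y S \<ge> 0" "ww x y (-S) \<le> 0" "ww x y S < 1" "ww x y (-S) > -1"
    "(1+4*y^2)*ww x y (-S) + 4*y^2 \<le> 0"
    "y \<noteq> 0 \<Longrightarrow> (1+4*y^2)*ww x y (-S) + 4*y^2 < 0"
proof -
  have Dp: "Delta x y > 0" using Delta_pos x by blast
  show S0: "S > 0" unfolding S_def using Dp by simp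
  show S2: "S^2 = (x^2-4)^2 + 2*(8*x^2*y^2)*r1sq x y" unfolding S_def using Dp Delta_eq by simp
  have r0: "r1sq x y > 0" by (rule r_pos)
  have rr: "r1sq x y = 4 + x^2 + 4*x^2*y^2" by (simp add: r1sq_def)
  have q0: "8*x^2*y^2 \<ge> 0" by simp
  have "\<bar>x^2-4\<bar>^2 \<le> S^2" using S2 r0 q0 by (simp add: power2_abs)
  then show us: "\<bar>x^2-4\<bar> \<le> S" using S0 abs_le_square_iff[of "x^2-4" S] by (simp add: power2_abs)
  show "ww x y S \<ge> 0" unfolding ww_def using us r0 by (auto simp: abs_le_iff)
  show "ww x y (-S) \<le> 0" unfolding ww_def using us r0 by (auto simp: abs_le_iff divide_nonpos_pos)
  have e1: "(x^2+12+8*x^2*y^2)^2 - S^2 = 32*x^2+128+16*(8*x^2*y^2)" unfolding S2 rr by algebra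
  have xy0: "0 \<le> x^2*y^2" "0 \<le> x^2" by simp_all
  have "S^2 < (x^2+12+8*x^2*y^2)^2" using e1 xy0 by linarith
  then have "S < x^2+12+8*x^2*y^2" using power_less_imp_less_base[of S 2] by (simp add: add_pos_nonneg)
  then show "ww x y S < 1" unfolding ww_def using r0 rr by (simp add: divide_less_eq)
  have e2: "(3*x^2+4+8*x^2*y^2)^2 - S^2 = 8*x^4+32*x^2+4*(8*x^2*y^2)*x^2" unfolding S2 rr by algebra
  have "x^4 > 0" "x^2 > 0" "8*x^2*y^2*x^2 \<ge> 0" using x(1) by auto
  then have "S^2 < (3*x^2+4+8*x^2*y^2)^2" using e2 by linarith
  then have "S < 3*x^2+4+8*x^2*y^2" using power_less_imp_less_base[of S 2] by (simp add: add_pos_nonneg)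
  then show "ww x y (-S) > -1" unfolding ww_def using r0 rr by (simp add: less_divide_eq)
  have e3: "((1+4*y^2)*S)^2 - ((1+4*y^2)*(x^2-4) + 8*r1sq x y*y^2)^2 = 64*r1sq x y*y^2"
    unfolding power_mult_distrib S2 rr by algebra
  have key: "(1+4*y^2)*(x^2-4) + 8*r1sq x y*y^2 \<le> (1+4*y^2)*S \<and>
     (y \<noteq> 0 \<longrightarrow> (1+4*y^2)*(x^2-4) + 8*r1sq x y*y^2 < (1+4*y^2)*S)"
  proof -
    have p: "(1+4*y^2)*S > 0" using S0 by (simp add: add_pos_nonneg)
    have m0: "64*r1sq x y*y^2 \<ge> 0" using r0 by simp
    have m1: "y \<noteq> 0 \<Longrightarrow> 64*r1sq x y*y^2 > 0" using r0 by simp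
    have le: "((1+4*y^2)*(x^2-4) + 8*r1sq x y*y^2)^2 \<le> ((1+4*y^2)*S)^2" using e3 m0 by linarith
    have lt: "y \<noteq> 0 \<Longrightarrow> ((1+4*y^2)*(x^2-4) + 8*r1sq x y*y^2)^2 < ((1+4*y^2)*S)^2" using e3 m1 by linarith
    show ?thesis
    proof (cases "(1+4*y^2)*(x^2-4) + 8*r1sq x y*y^2 \<le> 0")
      case True then show ?thesis using p by auto
    next
      case False
      have "y \<noteq> 0 \<Longrightarrow> (1+4*y^2)*(x^2-4) + 8*r1sq x y*y^2 < (1+4*y^2)*S"
        using lt p power_less_imp_less_base[of "(1+4*y^2)*(x^2-4) + 8*r1sq x y*y^2" 2 "(1+4*y^2)*S"] by simp
      then show ?thesis using p le power2_le_imp_le[OF le] by auto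
    qed
  qed
  have ee: "(1+4*y^2)*ww x y (-S) + 4*y^2 = ((1+4*y^2)*(x^2-4) + 8*r1sq x y*y^2 - (1+4*y^2)*S) / (2*r1sq x y)"
    unfolding ww_def using r0 by (simp add: field_simps)
  show "(1+4*y^2)*ww x y (-S) + 4*y^2 \<le> 0" unfolding ee using key r0 by (simp add: divide_nonpos_pos)
  show "y \<noteq> 0 \<Longrightarrow> (1+4*y^2)*ww x y (-S) + 4*y^2 < 0" unfolding ee using key r0 by (simp add: divide_neg_pos)
qed

lemma Gx_alt: "Gx x y z = 2*x*(1 - ww x y z)*((1+4*y^2)*ww x y z + 4*y^2) / z"
  by (simp add: Gx_def)

lemma y0_S: assumes "x > 0" "(x,0) \<noteq> (2,(0::real))"
  shows "sqrt (Delta x 0) = \<bar>x^2-4\<bar>"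
  unfolding Delta_eq by (simp only: power_zero_numeral mult_zero_right mult_zero_left add_0_right real_sqrt_abs)

lemma sign_p:
  assumes x: "x > 0" "x \<le> 2" "(x,y) \<noteq> (2,0)"
  shows "Gx x y (sqrt (Delta x y)) \<ge> 0 \<and> (Gx x y (sqrt (Delta x y)) = 0 \<longleftrightarrow> y = 0)"
proof -
  define S where "S = sqrt (Delta x y)"
  note b = basic[OF x(1) x(3), folded S_def]
  have A: "2*x*(1 - ww x y S) > 0" using b x by simp
  show ?thesis
  proof (cases "y = 0")
    case True
    have "x^2 \<le> 2^2" using x power_mono[of x 2 2] by simp
    then have "S = 4 - x^2" unfolding S_def True using y0_S[of x] x True by simp
    then have "ww x y S = 0" unfolding ww_def by simp
    then show ?thesis unfolding S_def[symmetric] Gx_alt using True by simp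
  next
    case False
    have P: "(1+4*y^2)*ww x y S + 4*y^2 > 0" using b False by (simp add: add_nonneg_pos)
    have "Gx x y S > 0" unfolding Gx_alt using A P b by simp
    then show ?thesis unfolding S_def[symmetric] using False by simp
  qed
qed

lemma sign_m:
  assumes x: "x \<ge> 2" "(x,y) \<noteq> (2,0)"
  shows "Gx x y (- sqrt (Delta x y)) \<ge> 0 \<and> (Gx x y (- sqrt (Delta x y)) = 0 \<longleftrightarrow> y = 0)"
proof -
  have x0: "x > 0" using x by simp
  define S where "S = sqrt (Delta x y)"
  note b = basic[OF x0 x(2), folded S_def]
  have A: "2*x*(1 - ww x y (-S)) > 0" using b x by simp
  show ?thesis
  proof (cases "y = 0")
    case True
    have "x^2 \<ge> 2^2" using x(1) power_mono[of 2 x 2] by simp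
    then have "S = x^2 - 4" unfolding S_def True using y0_S[of x] x True by simp
    then have "ww x y (-S) = 0" unfolding ww_def by simp
    then show ?thesis unfolding S_def[symmetric] Gx_alt using True by simp
  next
    case False
    have P: "(1+4*y^2)*ww x y (-S) + 4*y^2 < 0" using b False by simp
    have n: "2*x*(1 - ww x y (-S)) * ((1+4*y^2)*ww x y (-S) + 4*y^2) < 0"
      using A P by (simp add: mult_pos_neg)
    have "2*x*(1 - ww x y (-S)) * ((1+4*y^2)*ww x y (-S) + 4*y^2) / S < 0"
      using divide_neg_pos[OF n b(1)] .
    then have "Gx x y (-S) > 0" unfolding Gx_alt by simp
    then show ?thesis unfolding S_def[symmetric] using False by simp
  qed
qed

lemma ysign:
  assumes x: "x > 0" "y \<noteq> 0"
  shows "y * Gy x y (sqrt (Delta x y)) > 0 \<and> y * Gy x y (- sqrt (Delta x y)) < 0"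
proof -
  have xy: "(x,y) \<noteq> (2,0)" using x by simp
  define S where "S = sqrt (Delta x y)"
  note b = basic[OF x(1) xy, folded S_def]
  have w1: "1 - (ww x y S)^2 > 0"
  proof -
    have "(ww x y S)^2 < 1^2" using b power_strict_mono[of "ww x y S" 1 2] by simp
    then show ?thesis by simp
  qed
  have w2: "1 - (ww x y (-S))^2 > 0"
  proof -
    have "(- ww x y (-S))^2 < 1^2" using b power_strict_mono[of "- ww x y (-S)" 1 2] by simp
    then show ?thesis by simp
  qed
  have e: "y * Gy x y z = 8*x^2*y^2*(1 - (ww x y z)^2) / z" for z
    unfolding Gy_def by (simp add: power2_eq_square)
  have p: "8*x^2*y^2 > 0" using x by simp
  show ?thesis unfolding S_def[symmetric] e using p w1 w2 b by (simp add: divide_neg_pos)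
qed

lemma bounds:
  assumes x: "x > 0" "(x,y) \<noteq> (2,0)" and t1: "y^2 \<le> 1" and c: "c = 1 \<or> c = -1"
  shows "\<bar>Gx x y (c * sqrt (Delta x y))\<bar> \<le> 8 \<and> \<bar>Gy x y (c * sqrt (Delta x y))\<bar> \<le> 3"
proof -
  define S where "S = sqrt (Delta x y)"
  note b = basic[OF x, folded S_def]
  define w where "w = ww x y (c*S)"
  define r where "r = r1sq x y"
  have r0: "r > 0" unfolding r_def by (rule r_pos)
  have wlt: "\<bar>w\<bar> < 1" using b c unfolding w_def by auto
  have "\<bar>x^2 - 4 + c*S\<bar> \<le> 2*S" using b c by (auto simp: abs_le_iff)
  then have wS: "\<bar>w\<bar> \<le> S / r" unfolding w_def ww_def r_def[symmetric] using r0
    by (simp add: abs_divide divide_le_eq field_simps)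
  have t0: "y^2 \<ge> 0" by simp
  have w1: "\<bar>1 - w\<bar> \<le> 2" using wlt by auto
  have P: "\<bar>(1+4*y^2)*w + 4*y^2\<bar> \<le> (1+4*y^2)*(S/r) + 4*y^2"
  proof -
    have "\<bar>(1+4*y^2)*w + 4*y^2\<bar> \<le> \<bar>(1+4*y^2)*w\<bar> + 4*y^2" by (simp add: abs_triangle_ineq[THEN order_trans])
    also have "\<bar>(1+4*y^2)*w\<bar> = (1+4*y^2)*\<bar>w\<bar>" by (simp add: abs_mult add_nonneg_nonneg)
    also have "(1+4*y^2)*\<bar>w\<bar> \<le> (1+4*y^2)*(S/r)" using mult_left_mono[OF wS, of "1+4*y^2"] t0 by simp
    finally show ?thesis by simp
  qed
  have cz: "\<bar>c*S\<bar> = S" using c b by auto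
  have Gxe: "\<bar>Gx x y (c*S)\<bar> = 2*x*(\<bar>1-w\<bar>*\<bar>(1+4*y^2)*w + 4*y^2\<bar>) / S"
    unfolding Gx_alt w_def[symmetric] using x b cz by (simp add: abs_divide abs_mult)
  have "\<bar>1-w\<bar>*\<bar>(1+4*y^2)*w + 4*y^2\<bar> \<le> 2*((1+4*y^2)*(S/r) + 4*y^2)"
    using mult_mono[OF w1 P] by simp
  then have "\<bar>Gx x y (c*S)\<bar> \<le> 2*x*(2*((1+4*y^2)*(S/r) + 4*y^2)) / S"
    unfolding Gxe using x b by (simp add: divide_right_mono mult_left_mono)
  also have "\<dots> = 4*x*(1+4*y^2)/r + 16*x*y^2/S" using b r0 by (simp add: field_simps)
  also have "\<dots> \<le> 5 + 3"
  proof (rule add_mono)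
    have e: "5*(4 + x^2 + 4*x^2*y^2) - 4*x*(1+4*y^2) = (1-y^2)*(5*(x-2/5)^2+96/5) + y^2*((5*x-2)^2+16)"
      by algebra
    have "0 \<le> (1-y^2)*(5*(x-2/5)^2+96/5)" using t1 by simp
    moreover have "0 \<le> y^2*((5*x-2)^2+16)" by simp
    ultimately have "4*x*(1+4*y^2) \<le> 5*r" unfolding r_def r1sq_def using e by linarith
    then show "4*x*(1+4*y^2)/r \<le> 5" using r0 by (simp add: divide_le_eq)
    have "(x+2)^2 = x^2 + 4*x + 4" by algebra
    moreover have "0 \<le> x^2" "0 \<le> 8 * x^2 * y^2" by simp_all
    ultimately have A4: "(x + 2)^2 + 8 * x^2 * y^2 \<ge> 4" using x(1) by linarith
    have B: "(x - 2)^2 + 8 * x^2 * y^2 \<ge> 8*x^2*y^2" by simp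
    have AB: "4 * (8*x^2*y^2) \<le> ((x + 2)^2 + 8 * x^2 * y^2) * ((x - 2)^2 + 8 * x^2 * y^2)"
      by (rule mult_mono[OF A4 B]) (simp_all add: add_nonneg_nonneg)
    have "S^2 = Delta x y" unfolding S_def using Delta_pos[OF x] by simp
    then have S4: "S^2 \<ge> 4 * (8*x^2*y^2)" using AB unfolding Delta_def by linarith
    have e: "9 * (4 * (8*x^2*y^2)) - (16*x*y^2)^2 = x^2*y^2*(288 - 256*y^2)" by algebra
    have "0 \<le> 288 - 256*y^2" using t1 by linarith
    then have "0 \<le> x^2*y^2*(288 - 256*y^2)" by simp
    then have "0 \<le> 9 * (4 * (8*x^2*y^2)) - (16*x*y^2)^2" unfolding e .
    then have "(16*x*y^2)^2 \<le> 9 * (4 * (8*x^2*y^2))" by (simp only: diff_ge_0_iff_ge)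
    also have "\<dots> \<le> 9 * S^2" using S4 by simp
    also have "\<dots> = (3*S)^2" by algebra
    finally have "(16*x*y^2)^2 \<le> (3*S)^2" .
    moreover have "0 \<le> 3*S" using b(1) by simp
    ultimately have "16*x*y^2 \<le> 3*S" by (rule power2_le_imp_le)
    then show "16*x*y^2/S \<le> 3" using b(1) by (simp add: divide_le_eq)
  qed
  finally have G1: "\<bar>Gx x y (c*S)\<bar> \<le> 8" by simp
  have "w^2 < 1" using wlt abs_square_less_1 by blast
  moreover have "0 \<le> w^2" by simp
  ultimately have w2: "0 \<le> 1 - w^2" "1 - w^2 \<le> 1" by linarith+
  have Gye: "\<bar>Gy x y (c*S)\<bar> = 8*x^2*\<bar>y\<bar>*(1-w^2) / S"
    unfolding Gy_def w_def[symmetric] using x b cz w2 by (simp add: abs_divide abs_mult)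
  have "8*x^2*\<bar>y\<bar>*(1-w^2) \<le> 8*x^2*\<bar>y\<bar>" using w2 by (simp add: mult_left_le)
  moreover have "8*x^2*\<bar>y\<bar> \<le> 3*S"
  proof -
    have "(x+2)^2 = x^2 + 4*x + 4" by algebra
    moreover have "0 \<le> 8 * x^2 * y^2" by simp_all
    ultimately have A4: "(x + 2)^2 + 8 * x^2 * y^2 \<ge> x^2" using x(1) by linarith
    have B: "(x - 2)^2 + 8 * x^2 * y^2 \<ge> 8*x^2*y^2" by simp
    have AB: "x^2 * (8*x^2*y^2) \<le> ((x + 2)^2 + 8 * x^2 * y^2) * ((x - 2)^2 + 8 * x^2 * y^2)"
      by (rule mult_mono[OF A4 B]) (simp_all add: add_nonneg_nonneg)
    have "S^2 = Delta x y" unfolding S_def using Delta_pos[OF x] by simp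
    then have "S^2 \<ge> x^2 * (8*x^2*y^2)" using AB unfolding Delta_def by simp
    moreover have "x^2 * (8*x^2*y^2) = 8*(x^4*y^2)" by algebra
    moreover have "(8*x^2*\<bar>y\<bar>)^2 = 64*(x^4*y^2)" by (simp add: power_mult_distrib power2_abs)
    moreover have "(3*S)^2 = 9*S^2" by algebra
    moreover have "0 \<le> x^4*y^2" by simp
    ultimately have "(8*x^2*\<bar>y\<bar>)^2 \<le> 9 * S^2" by linarith
    also have "\<dots> = (3*S)^2" by algebra
    finally have "(8*x^2*\<bar>y\<bar>)^2 \<le> (3*S)^2" .
    moreover have "0 \<le> 3*S" using b(1) by simp
    ultimately show ?thesis by (rule power2_le_imp_le)
  qed
  ultimately have "8*x^2*\<bar>y\<bar>*(1-w^2) / S \<le> 3" using b(1) by (simp add: divide_le_eq)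
  then have G2: "\<bar>Gy x y (c*S)\<bar> \<le> 3" unfolding Gye .
  show ?thesis using G1 G2 unfolding S_def by simp
qed

definition Kx :: "real \<Rightarrow> real" where
  "Kx x = (x^2 + 4*x + 4 + (8/100)*x^2) * (100 + 8*x^2)"

lemma pw: assumes "0 \<le> (a::real)" "a \<le> x" "x \<le> b" shows
  "a^2 \<le> x^2" "x^2 \<le> b^2" "a^3 \<le> x^3" "x^3 \<le> b^3" "a^4 \<le> x^4" "x^4 \<le> b^4" "a^5 \<le> x^5" "x^5 \<le> b^5"
  using assms by (auto intro!: power_mono)

lemma P1_pos: assumes "1 \<le> x" "x \<le> 2"
  shows "480*x*(x^2+4) - Kx x - (Kx x*(10/11) + 110*(x+2)^2)/2 > 0"
proof -
  have e: "480*x*(x^2+4) - Kx x - (Kx x*(10/11) + 110*(x+2)^2)/2 = -8820/11 + 12300/11*x - 2845/11*x^2 + 4768/11*x^3 - 3456/275*x^4"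
    unfolding Kx_def by algebra
  have "0 < -8820/11 + 12300/11*x - 2845/11*x^2 + 4768/11*x^3 - 3456/275*x^4"
  proof -
    have c0: "1 \<le> x \<Longrightarrow> x \<le> 3/2 \<Longrightarrow> 0 < -8820/11 + 12300/11*x - 2845/11*x^2 + 4768/11*x^3 - 3456/275*x^4"
    proof -
      assume h1: "1 \<le> x" and h2: "x \<le> 3/2"
      have h0: "0 \<le> (1::real)" by simp
      have x0: "0 \<le> x" using h0 h1 by linarith
      have "1 \<le> x^2" using power_mono[OF h1 h0, of 2] by (simp add: power_divide)
      moreover have "x^2 \<le> 9/4" using power_mono[OF h2 x0, of 2] by (simp add: power_divide)
      moreover have "1 \<le> x^3" using power_mono[OF h1 h0, of 3] by (simp add: power_divide)
      moreover have "x^3 \<le> 27/8" using power_mono[OF h2 x0, of 3] by (simp add: power_divide)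
      moreover have "1 \<le> x^4" using power_mono[OF h1 h0, of 4] by (simp add: power_divide)
      moreover have "x^4 \<le> 81/16" using power_mono[OF h2 x0, of 4] by (simp add: power_divide)
      ultimately show ?thesis using h1 h2 by linarith
    qed
    have c1: "3/2 \<le> x \<Longrightarrow> x \<le> 2 \<Longrightarrow> 0 < -8820/11 + 12300/11*x - 2845/11*x^2 + 4768/11*x^3 - 3456/275*x^4"
    proof -
      assume h1: "3/2 \<le> x" and h2: "x \<le> 2"
      have h0: "0 \<le> (3/2::real)" by simp
      have x0: "0 \<le> x" using h0 h1 by linarith
      have "9/4 \<le> x^2" using power_mono[OF h1 h0, of 2] by (simp add: power_divide)
      moreover have "x^2 \<le> 4" using power_mono[OF h2 x0, of 2] by (simp add: power_divide)
      moreover have "27/8 \<le> x^3" using power_mono[OF h1 h0, of 3] by (simp add: power_divide)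
      moreover have "x^3 \<le> 8" using power_mono[OF h2 x0, of 3] by (simp add: power_divide)
      moreover have "81/16 \<le> x^4" using power_mono[OF h1 h0, of 4] by (simp add: power_divide)
      moreover have "x^4 \<le> 16" using power_mono[OF h2 x0, of 4] by (simp add: power_divide)
      ultimately show ?thesis using h1 h2 by linarith
    qed
    show ?thesis using assms c0 c1 by (smt (verit))
  qed
  then show ?thesis unfolding e .
qed

lemma P2_pos: assumes "2 \<le> x" "x \<le> 3"
  shows "480*x*(x^2+4) - Kx x > 0"
proof -
  have e: "480*x*(x^2+4) - Kx x = -400 + 1520*x - 140*x^2 + 448*x^3 - 216/25*x^4"
    unfolding Kx_def by algebra
  have "0 < -400 + 1520*x - 140*x^2 + 448*x^3 - 216/25*x^4"
  proof -
    have c0: "2 \<le> x \<Longrightarrow> x \<le> 3 \<Longrightarrow> 0 < -400 + 1520*x - 140*x^2 + 448*x^3 - 216/25*x^4"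
    proof -
      assume h1: "2 \<le> x" and h2: "x \<le> 3"
      have h0: "0 \<le> (2::real)" by simp
      have x0: "0 \<le> x" using h0 h1 by linarith
      have "4 \<le> x^2" using power_mono[OF h1 h0, of 2] by (simp add: power_divide)
      moreover have "x^2 \<le> 9" using power_mono[OF h2 x0, of 2] by (simp add: power_divide)
      moreover have "8 \<le> x^3" using power_mono[OF h1 h0, of 3] by (simp add: power_divide)
      moreover have "x^3 \<le> 27" using power_mono[OF h2 x0, of 3] by (simp add: power_divide)
      moreover have "16 \<le> x^4" using power_mono[OF h1 h0, of 4] by (simp add: power_divide)
      moreover have "x^4 \<le> 81" using power_mono[OF h2 x0, of 4] by (simp add: power_divide)
      ultimately show ?thesis using h1 h2 by linarith
    qed
    show ?thesis using assms c0 by blast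
  qed
  then show ?thesis unfolding e .
qed

lemma P3_pos: assumes "2 \<le> x" "x \<le> 3"
  shows "960*x*(x^2+4) - Kx x - (Kx x*(5/6) + 120*(x+2)^2)/2 - 48*x*(Kx x/55 + 55) > 0"
proof -
  have e: "960*x*(x^2+4) - Kx x - (Kx x*(5/6) + 120*(x+2)^2)/2 - 48*x*(Kx x/55 + 55) = -2420/3 + 1460/33*x - 20045/33*x^2 + 26152/33*x^3 - 11046/275*x^4 - 10368/1375*x^5"
    unfolding Kx_def by algebra
  have "0 < -2420/3 + 1460/33*x - 20045/33*x^2 + 26152/33*x^3 - 11046/275*x^4 - 10368/1375*x^5"
  proof -
    have c0: "2 \<le> x \<Longrightarrow> x \<le> 7/3 \<Longrightarrow> 0 < -2420/3 + 1460/33*x - 20045/33*x^2 + 26152/33*x^3 - 11046/275*x^4 - 10368/1375*x^5"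
    proof -
      assume h1: "2 \<le> x" and h2: "x \<le> 7/3"
      have h0: "0 \<le> (2::real)" by simp
      have x0: "0 \<le> x" using h0 h1 by linarith
      have "4 \<le> x^2" using power_mono[OF h1 h0, of 2] by (simp add: power_divide)
      moreover have "x^2 \<le> 49/9" using power_mono[OF h2 x0, of 2] by (simp add: power_divide)
      moreover have "8 \<le> x^3" using power_mono[OF h1 h0, of 3] by (simp add: power_divide)
      moreover have "x^3 \<le> 343/27" using power_mono[OF h2 x0, of 3] by (simp add: power_divide)
      moreover have "16 \<le> x^4" using power_mono[OF h1 h0, of 4] by (simp add: power_divide)
      moreover have "x^4 \<le> 2401/81" using power_mono[OF h2 x0, of 4] by (simp add: power_divide)
      moreover have "32 \<le> x^5" using power_mono[OF h1 h0, of 5] by (simp add: power_divide)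
      moreover have "x^5 \<le> 16807/243" using power_mono[OF h2 x0, of 5] by (simp add: power_divide)
      ultimately show ?thesis using h1 h2 by linarith
    qed
    have c1: "7/3 \<le> x \<Longrightarrow> x \<le> 8/3 \<Longrightarrow> 0 < -2420/3 + 1460/33*x - 20045/33*x^2 + 26152/33*x^3 - 11046/275*x^4 - 10368/1375*x^5"
    proof -
      assume h1: "7/3 \<le> x" and h2: "x \<le> 8/3"
      have h0: "0 \<le> (7/3::real)" by simp
      have x0: "0 \<le> x" using h0 h1 by linarith
      have "49/9 \<le> x^2" using power_mono[OF h1 h0, of 2] by (simp add: power_divide)
      moreover have "x^2 \<le> 64/9" using power_mono[OF h2 x0, of 2] by (simp add: power_divide)
      moreover have "343/27 \<le> x^3" using power_mono[OF h1 h0, of 3] by (simp add: power_divide)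
      moreover have "x^3 \<le> 512/27" using power_mono[OF h2 x0, of 3] by (simp add: power_divide)
      moreover have "2401/81 \<le> x^4" using power_mono[OF h1 h0, of 4] by (simp add: power_divide)
      moreover have "x^4 \<le> 4096/81" using power_mono[OF h2 x0, of 4] by (simp add: power_divide)
      moreover have "16807/243 \<le> x^5" using power_mono[OF h1 h0, of 5] by (simp add: power_divide)
      moreover have "x^5 \<le> 32768/243" using power_mono[OF h2 x0, of 5] by (simp add: power_divide)
      ultimately show ?thesis using h1 h2 by linarith
    qed
    have c2: "8/3 \<le> x \<Longrightarrow> x \<le> 3 \<Longrightarrow> 0 < -2420/3 + 1460/33*x - 20045/33*x^2 + 26152/33*x^3 - 11046/275*x^4 - 10368/1375*x^5"
    proof -
      assume h1: "8/3 \<le> x" and h2: "x \<le> 3"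
      have h0: "0 \<le> (8/3::real)" by simp
      have x0: "0 \<le> x" using h0 h1 by linarith
      have "64/9 \<le> x^2" using power_mono[OF h1 h0, of 2] by (simp add: power_divide)
      moreover have "x^2 \<le> 9" using power_mono[OF h2 x0, of 2] by (simp add: power_divide)
      moreover have "512/27 \<le> x^3" using power_mono[OF h1 h0, of 3] by (simp add: power_divide)
      moreover have "x^3 \<le> 27" using power_mono[OF h2 x0, of 3] by (simp add: power_divide)
      moreover have "4096/81 \<le> x^4" using power_mono[OF h1 h0, of 4] by (simp add: power_divide)
      moreover have "x^4 \<le> 81" using power_mono[OF h2 x0, of 4] by (simp add: power_divide)
      moreover have "32768/243 \<le> x^5" using power_mono[OF h1 h0, of 5] by (simp add: power_divide)
      moreover have "x^5 \<le> 243" using power_mono[OF h2 x0, of 5] by (simp add: power_divide)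
      ultimately show ?thesis using h1 h2 by linarith
    qed
    show ?thesis using assms c0 c1 c2 by (smt (verit))
  qed
  then show ?thesis unfolding e .
qed

lemma P4_pos: assumes "1 \<le> x" "x \<le> 2"
  shows "960*x*(x^2+4) - Kx x - 48*x*(Kx x/40 + 40) > 0"
proof -
  have e: "960*x*(x^2+4) - Kx x - 48*x*(Kx x/40 + 40) = -400 + 1040*x - 620*x^2 + 760*x^3 - 1176/25*x^4 - 1296/125*x^5"
    unfolding Kx_def by algebra
  have "0 < -400 + 1040*x - 620*x^2 + 760*x^3 - 1176/25*x^4 - 1296/125*x^5"
  proof -
    have c0: "1 \<le> x \<Longrightarrow> x \<le> 4/3 \<Longrightarrow> 0 < -400 + 1040*x - 620*x^2 + 760*x^3 - 1176/25*x^4 - 1296/125*x^5"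
    proof -
      assume h1: "1 \<le> x" and h2: "x \<le> 4/3"
      have h0: "0 \<le> (1::real)" by simp
      have x0: "0 \<le> x" using h0 h1 by linarith
      have "1 \<le> x^2" using power_mono[OF h1 h0, of 2] by (simp add: power_divide)
      moreover have "x^2 \<le> 16/9" using power_mono[OF h2 x0, of 2] by (simp add: power_divide)
      moreover have "1 \<le> x^3" using power_mono[OF h1 h0, of 3] by (simp add: power_divide)
      moreover have "x^3 \<le> 64/27" using power_mono[OF h2 x0, of 3] by (simp add: power_divide)
      moreover have "1 \<le> x^4" using power_mono[OF h1 h0, of 4] by (simp add: power_divide)
      moreover have "x^4 \<le> 256/81" using power_mono[OF h2 x0, of 4] by (simp add: power_divide)
      moreover have "1 \<le> x^5" using power_mono[OF h1 h0, of 5] by (simp add: power_divide)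
      moreover have "x^5 \<le> 1024/243" using power_mono[OF h2 x0, of 5] by (simp add: power_divide)
      ultimately show ?thesis using h1 h2 by linarith
    qed
    have c1: "4/3 \<le> x \<Longrightarrow> x \<le> 5/3 \<Longrightarrow> 0 < -400 + 1040*x - 620*x^2 + 760*x^3 - 1176/25*x^4 - 1296/125*x^5"
    proof -
      assume h1: "4/3 \<le> x" and h2: "x \<le> 5/3"
      have h0: "0 \<le> (4/3::real)" by simp
      have x0: "0 \<le> x" using h0 h1 by linarith
      have "16/9 \<le> x^2" using power_mono[OF h1 h0, of 2] by (simp add: power_divide)
      moreover have "x^2 \<le> 25/9" using power_mono[OF h2 x0, of 2] by (simp add: power_divide)
      moreover have "64/27 \<le> x^3" using power_mono[OF h1 h0, of 3] by (simp add: power_divide)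
      moreover have "x^3 \<le> 125/27" using power_mono[OF h2 x0, of 3] by (simp add: power_divide)
      moreover have "256/81 \<le> x^4" using power_mono[OF h1 h0, of 4] by (simp add: power_divide)
      moreover have "x^4 \<le> 625/81" using power_mono[OF h2 x0, of 4] by (simp add: power_divide)
      moreover have "1024/243 \<le> x^5" using power_mono[OF h1 h0, of 5] by (simp add: power_divide)
      moreover have "x^5 \<le> 3125/243" using power_mono[OF h2 x0, of 5] by (simp add: power_divide)
      ultimately show ?thesis using h1 h2 by linarith
    qed
    have c2: "5/3 \<le> x \<Longrightarrow> x \<le> 2 \<Longrightarrow> 0 < -400 + 1040*x - 620*x^2 + 760*x^3 - 1176/25*x^4 - 1296/125*x^5"
    proof -
      assume h1: "5/3 \<le> x" and h2: "x \<le> 2"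
      have h0: "0 \<le> (5/3::real)" by simp
      have x0: "0 \<le> x" using h0 h1 by linarith
      have "25/9 \<le> x^2" using power_mono[OF h1 h0, of 2] by (simp add: power_divide)
      moreover have "x^2 \<le> 4" using power_mono[OF h2 x0, of 2] by (simp add: power_divide)
      moreover have "125/27 \<le> x^3" using power_mono[OF h1 h0, of 3] by (simp add: power_divide)
      moreover have "x^3 \<le> 8" using power_mono[OF h2 x0, of 3] by (simp add: power_divide)
      moreover have "625/81 \<le> x^4" using power_mono[OF h1 h0, of 4] by (simp add: power_divide)
      moreover have "x^4 \<le> 16" using power_mono[OF h2 x0, of 4] by (simp add: power_divide)
      moreover have "3125/243 \<le> x^5" using power_mono[OF h1 h0, of 5] by (simp add: power_divide)
      moreover have "x^5 \<le> 32" using power_mono[OF h2 x0, of 5] by (simp add: power_divide)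
      ultimately show ?thesis using h1 h2 by linarith
    qed
    show ?thesis using assms c0 c1 c2 by (smt (verit))
  qed
  then show ?thesis unfolding e .
qed



lemma wedge_facts:
  assumes y: "y \<noteq> 0" "\<bar>y\<bar> \<le> 1/10" "\<bar>x-2\<bar> \<le> 10*\<bar>y\<bar>"
  shows "1 \<le> x" "x \<le> 3" "0 < y^2" "y^2 \<le> 1/100" "(x-2)^2 \<le> 100*y^2"
    "sqrt (Delta x y) ^ 2 \<le> Kx x * y^2" "(x^2-4)^2 \<le> 100*y^2*(x+2)^2" "0 \<le> Kx x"
proof -
  show x1: "1 \<le> x" and x3: "x \<le> 3" using y by auto
  show "0 < y^2" using y by simp
  have "\<bar>y\<bar>^2 \<le> (1/10)^2" using y(2) by (intro power_mono) simp_all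
  then show t1: "y^2 \<le> 1/100" by (simp add: power2_abs power_divide)
  have "\<bar>x-2\<bar>^2 \<le> (10*\<bar>y\<bar>)^2" using y(3) by (intro power_mono) simp_all
  then show d: "(x-2)^2 \<le> 100*y^2" by (simp add: power2_abs power_mult_distrib)
  have x0: "x > 0" using x1 by simp
  have xy: "(x,y) \<noteq> (2,0)" using y by simp
  have S2: "sqrt (Delta x y) ^ 2 = Delta x y" using Delta_pos[OF x0 xy] by simp
  have A: "(x + 2)^2 + 8 * x^2 * y^2 \<le> x^2 + 4*x + 4 + (8/100)*x^2"
  proof -
    have "8 * x^2 * y^2 \<le> 8 * x^2 * (1/100)" using t1 by (intro mult_left_mono) simp_all
    moreover have "(x+2)^2 = x^2 + 4*x + 4" by algebra
    ultimately show ?thesis by linarith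
  qed
  have B: "(x - 2)^2 + 8 * x^2 * y^2 \<le> (100 + 8*x^2) * y^2"
    using d by (simp add: algebra_simps)
  have A0: "0 \<le> (x - 2)^2 + 8 * x^2 * y^2" by simp
  have A1: "0 \<le> x^2 + 4*x + 4 + (8/100)*x^2" using x0 by simp
  have "Delta x y \<le> (x^2 + 4*x + 4 + (8/100)*x^2) * ((100 + 8*x^2) * y^2)"
    unfolding Delta_def by (rule mult_mono[OF A B A1 A0])
  then show "sqrt (Delta x y) ^ 2 \<le> Kx x * y^2" unfolding S2 Kx_def by (simp add: mult.assoc)
  show "0 \<le> Kx x" unfolding Kx_def using A1 by simp
  have "(x^2-4)^2 = (x-2)^2 * (x+2)^2" by algebra
  also have "\<dots> \<le> (100*y^2) * (x+2)^2" using d by (intro mult_right_mono) simp_all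
  finally show "(x^2-4)^2 \<le> 100*y^2*(x+2)^2" .
qed

lemma Kx_le: "1 \<le> x \<Longrightarrow> x \<le> 3 \<Longrightarrow> Kx x \<le> 4424"
proof -
  assume x1: "1 \<le> x" and x3: "x \<le> 3"
  have "x^2 \<le> 3^2" using x1 x3 by (intro power_mono) simp_all
  then have a: "x^2 \<le> 9" by simp
  have "x^2 + 4*x + 4 + (8/100)*x^2 \<le> 2572/100" using a x3 by linarith
  moreover have "100 + 8*x^2 \<le> 172" using a by linarith
  moreover have "0 \<le> x^2 + 4*x + 4 + (8/100)*x^2" "0 \<le> 100 + 8*x^2" using x1 by simp_all
  ultimately have "Kx x \<le> (2572/100) * 172" unfolding Kx_def by (intro mult_mono) simp_all
  then show ?thesis by simp
qed

lemma wedge_p: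
  assumes y: "y \<noteq> 0" "\<bar>y\<bar> \<le> 1/10" "\<bar>x-2\<bar> \<le> 10*\<bar>y\<bar>"
  shows "Gx x y (sqrt (Delta x y)) > 1/120"
proof -
  note wf = wedge_facts[OF y]
  have x0: "x > 0" using wf(1) by simp
  have xy: "(x,y) \<noteq> (2,0)" using y by simp
  define S where "S = sqrt (Delta x y)"
  note b = basic[OF x0 xy, folded S_def]
  define u where "u = x^2 - 4"
  define T where "T = y^2"
  define r where "r = r1sq x y"
  define w where "w = ww x y S"
  have T0: "T > 0" and T1: "T \<le> 1/100" using wf unfolding T_def by auto
  have SK: "S^2 \<le> Kx x * T" using wf(6) unfolding S_def T_def .
  have uK: "u^2 \<le> 100*T*(x+2)^2" using wf(7) unfolding u_def T_def .
  have r0: "r > 0" unfolding r_def by (rule r_pos)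
  have rr: "r = 4 + x^2 + 4*x^2*T" unfolding r_def T_def r1sq_def ..
  have S0: "S > 0" using b by simp
  have S2: "S^2 = u^2 + 16*x^2*T*r" using b(2) unfolding u_def T_def r_def by simp
  have w0: "w \<ge> 0" using b unfolding w_def by simp
  have S8: "S \<le> 8"
  proof -
    have "Kx x * T \<le> 4424 * (1/100)" using Kx_le[OF wf(1,2)] T1 T0 wf(8) by (intro mult_mono) simp_all
    then have "S^2 \<le> 8^2" using SK by simp
    moreover have "(0::real) \<le> 8" by simp
    ultimately show ?thesis by (rule power2_le_imp_le)
  qed
  have w2: "w \<le> 1/2"
  proof -
    have "0 \<le> x^2*T" using T0 by simp
    then have "u + S \<le> r" using S8 rr unfolding u_def by linarith
    then show ?thesis unfolding w_def ww_def u_def[symmetric] r_def[symmetric] using r0 by (simp add: divide_le_eq)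
  qed
  have wr: "w * (2*r) = u + S" unfolding w_def ww_def u_def r_def using r_pos[of x y] by simp
  have Su: "S - u > 0"
  proof -
    have "S^2 - u^2 = 16*x^2*T*r" using S2 by simp
    moreover have "16*x^2*T*r > 0" using x0 T0 r0 by simp
    ultimately have "u^2 < S^2" by linarith
    then have "u < S" using power_less_imp_less_base[of u 2 S] S0 by simp
    then show ?thesis by simp
  qed
  have wq: "w * (S - u) = 8*x^2*T"
  proof -
    have "w * (S - u) * (2*r) = (w * (2*r)) * (S - u)" by algebra
    also have "\<dots> = (u + S) * (S - u)" unfolding wr ..
    also have "\<dots> = S^2 - u^2" by algebra
    also have "\<dots> = (8*x^2*T) * (2*r)" using S2 by simp
    finally have "(w * (S - u)) * (2*r) = (8*x^2*T) * (2*r)" .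
    then show ?thesis using r0 by (simp only: mult_cancel_right) simp
  qed
  define E where "E = T*(480*x*(x^2+4)) - S^2 + S*(480*x*T + u)"
  have Eid: "120*x*(w + 4*T)*(S - u) - S*(S - u) = E"
  proof -
    have "120*x*(w + 4*T)*(S - u) = 120*x*(w*(S-u) + 4*T*(S - u))" by algebra
    also have "\<dots> = 120*x*(8*x^2*T + 4*T*(S - u))" unfolding wq ..
    finally have "120*x*(w + 4*T)*(S - u) = 120*x*(8*x^2*T + 4*T*(S - u))" .
    then show ?thesis unfolding E_def u_def by algebra
  qed
  have Epos: "E > 0"
  proof (cases "x \<ge> 2")
    case True
    have "u \<ge> 0" unfolding u_def using True power_mono[of 2 x 2] by simp
    then have C: "S*(480*x*T + u) \<ge> 0" using S0 x0 T0 by simp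
    have "T * (480*x*(x^2+4) - Kx x) > 0" using P2_pos[OF True wf(2)] T0 by simp
    then have "T*(480*x*(x^2+4)) - Kx x * T > 0" by (simp add: algebra_simps)
    then show ?thesis unfolding E_def using C SK by linarith
  next
    case False
    have "0 \<le> (S + (11/10)*u)^2" by simp
    then have Sub: "S*u \<ge> -(5/11)*S^2 - (11/20)*u^2" by (simp add: power2_eq_square algebra_simps)
    have C: "S*(480*x*T) \<ge> 0" using S0 x0 T0 by simp
    have "T * (480*x*(x^2+4) - Kx x - (Kx x*(10/11) + 110*(x+2)^2)/2) > 0"
      using P1_pos[OF wf(1)] False T0 by simp
    moreover have "T * (480*x*(x^2+4) - Kx x - (Kx x*(10/11) + 110*(x+2)^2)/2) =
       T*(480*x*(x^2+4)) - (16/11)*(Kx x * T) - (11/20)*(100*T*(x+2)^2)" by algebra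
    ultimately have P: "T*(480*x*(x^2+4)) - (16/11)*(Kx x * T) - (11/20)*(100*T*(x+2)^2) > 0"
      by simp
    have E2: "E = T*(480*x*(x^2+4)) - S^2 + S*(480*x*T) + S*u" unfolding E_def by (simp add: algebra_simps)
    show ?thesis unfolding E2 using C Sub P SK uK by linarith
  qed
  have "S*(S-u) < 120*x*(w + 4*T)*(S - u)" using Eid Epos by linarith
  then have main: "S < 120*x*(w + 4*T)" using Su by simp
  have P: "(1+4*y^2)*w + 4*y^2 \<ge> w + 4*T" unfolding T_def using w0 by (simp add: algebra_simps)
  have h1: "1/2 \<le> 1 - w" using w2 by linarith
  have h2: "0 \<le> w + 4*T" using w0 T0 by linarith
  have h3: "(1/2)*(w + 4*T) \<le> (1 - w)*((1+4*y^2)*w + 4*y^2)"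
    by (rule mult_mono[OF h1 P]) (use h1 h2 in linarith)+
  have h4: "2*x*((1/2)*(w + 4*T)) \<le> 2*x*((1 - w)*((1+4*y^2)*w + 4*y^2))"
    by (rule mult_left_mono[OF h3]) (use x0 in linarith)
  have "x*(w + 4*T) = 2*x*((1/2)*(w + 4*T))" by algebra
  also have "\<dots> \<le> 2*x*((1 - w)*((1+4*y^2)*w + 4*y^2))" by (rule h4)
  also have "\<dots> = 2*x*(1 - w)*((1+4*y^2)*w + 4*y^2)" by algebra
  finally have h5: "x*(w + 4*T) \<le> 2*x*(1 - w)*((1+4*y^2)*w + 4*y^2)" .
  have "x*(w + 4*T)/S \<le> 2*x*(1 - w)*((1+4*y^2)*w + 4*y^2)/S"
    by (rule divide_right_mono[OF h5]) (use S0 in linarith)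
  then have "x*(w + 4*T)/S \<le> Gx x y S" unfolding Gx_alt w_def[symmetric] .
  moreover have "1/120 < x*(w + 4*T)/S" using main S0 by (simp add: field_simps)
  ultimately have "1/120 < Gx x y S" by linarith
  then show ?thesis unfolding S_def .
qed

lemma wedge_m:
  assumes y: "y \<noteq> 0" "\<bar>y\<bar> \<le> 1/10" "\<bar>x-2\<bar> \<le> 10*\<bar>y\<bar>"
  shows "Gx x y (- sqrt (Delta x y)) > 1/120"
proof -
  note wf = wedge_facts[OF y]
  have x0: "x > 0" using wf(1) by simp
  have xy: "(x,y) \<noteq> (2,0)" using y by simp
  define S where "S = sqrt (Delta x y)"
  note b = basic[OF x0 xy, folded S_def]
  define u where "u = x^2 - 4"
  define T where "T = y^2"
  define r where "r = r1sq x y"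
  define v where "v = - ww x y (-S)"
  have T0: "T > 0" and T1: "T \<le> 1/100" using wf unfolding T_def by auto
  have SK: "S^2 \<le> Kx x * T" using wf(6) unfolding S_def T_def .
  have uK: "u^2 \<le> 100*T*(x+2)^2" using wf(7) unfolding u_def T_def .
  have K0: "0 \<le> Kx x" using wf(8) .
  have r0: "r > 0" unfolding r_def by (rule r_pos)
  have S0: "S > 0" using b by simp
  have S2: "S^2 = u^2 + 16*x^2*T*r" using b(2) unfolding u_def T_def r_def by simp
  have v0: "v \<ge> 0" using b unfolding v_def by simp
  have vr: "v * (2*r) = S - u" unfolding v_def ww_def u_def r_def using r_pos[of x y] by (simp add: field_simps)
  have Su: "S + u > 0"
  proof -
    have "S^2 - u^2 = 16*x^2*T*r" using S2 by simp
    moreover have "16*x^2*T*r > 0" using x0 T0 r0 by simp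
    ultimately have "u^2 < S^2" by linarith
    then have "(-u)^2 < S^2" by simp
    then have "-u < S" using power_less_imp_less_base[of "-u" 2 S] S0 by simp
    then show ?thesis by simp
  qed
  have vq: "v * (S + u) = 8*x^2*T"
  proof -
    have "v * (S + u) * (2*r) = (v * (2*r)) * (S + u)" by algebra
    also have "\<dots> = (S - u) * (S + u)" unfolding vr ..
    also have "\<dots> = S^2 - u^2" by algebra
    also have "\<dots> = (8*x^2*T) * (2*r)" using S2 by simp
    finally have "(v * (S + u)) * (2*r) = (8*x^2*T) * (2*r)" .
    then show ?thesis using r0 by (simp only: mult_cancel_right) simp
  qed
  define E where "E = T*(960*x*(x^2+4)) - S^2 - S*(u + 960*x*T)"
  have Eid: "240*x*(v - 4*T)*(S + u) - S*(S + u) = E"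
  proof -
    have "240*x*(v - 4*T)*(S + u) = 240*x*(v * (S+u) - 4*T*(S + u))" by algebra
    also have "\<dots> = 240*x*(8*x^2*T - 4*T*(S + u))" unfolding vq ..
    finally have "240*x*(v - 4*T)*(S + u) = 240*x*(8*x^2*T - 4*T*(S + u))" .
    then show ?thesis unfolding E_def u_def by algebra
  qed
  have Sy: "S \<le> \<bar>y\<bar> * ((Kx x / c + c)/2)" if c0: "c > 0" for c
  proof -
    have "(Kx x / c + c)^2/4 - Kx x = (Kx x / c - c)^2/4" using c0 by (simp add: field_simps power2_eq_square)
    then have "Kx x \<le> (Kx x / c + c)^2/4" by (smt (verit) zero_le_power2 divide_nonneg_pos)
    then have "Kx x * T \<le> (Kx x / c + c)^2/4 * T" using T0 by (intro mult_right_mono) simp_all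
    also have "\<dots> = (\<bar>y\<bar> * ((Kx x / c + c)/2))^2" unfolding T_def by (simp add: power_mult_distrib power2_abs power_divide)
    finally have "S^2 \<le> (\<bar>y\<bar> * ((Kx x / c + c)/2))^2" using SK by linarith
    moreover have "0 \<le> \<bar>y\<bar> * ((Kx x / c + c)/2)" using c0 K0 by simp
    ultimately show ?thesis by (rule power2_le_imp_le)
  qed
  have S960: "S*(960*x*T) \<le> 48*x*T*(Kx x / c + c)" if c0: "c > 0" for c
  proof -
    have "S \<le> (1/10) * ((Kx x / c + c)/2)"
    proof -
      have "\<bar>y\<bar> * ((Kx x / c + c)/2) \<le> (1/10) * ((Kx x / c + c)/2)"
        using y(2) c0 K0 by (intro mult_right_mono) simp_all
      then show ?thesis using Sy[OF c0] by linarith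
    qed
    then have "S*(960*x*T) \<le> ((1/10) * ((Kx x / c + c)/2))*(960*x*T)"
      using x0 T0 by (intro mult_right_mono) simp_all
    also have "\<dots> = 48*x*T*(Kx x / c + c)" by algebra
    finally show ?thesis .
  qed
  have Epos: "E > 0"
  proof (cases "x \<ge> 2")
    case True
    have "0 \<le> (S - (6/5)*u)^2" by simp
    then have Sub: "S*u \<le> (5/12)*S^2 + (3/5)*u^2" by (simp add: power2_eq_square algebra_simps)
    have C: "S*(960*x*T) \<le> 48*x*T*(Kx x / 55 + 55)" using S960[of 55] by simp
    have "T * (960*x*(x^2+4) - Kx x - (Kx x*(5/6) + 120*(x+2)^2)/2 - 48*x*(Kx x/55 + 55)) > 0"
      using P3_pos[OF True wf(2)] T0 by simp
    moreover have "T * (960*x*(x^2+4) - Kx x - (Kx x*(5/6) + 120*(x+2)^2)/2 - 48*x*(Kx x/55 + 55)) =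
       T*(960*x*(x^2+4)) - (17/12)*(Kx x * T) - (3/5)*(100*T*(x+2)^2) - 48*x*T*(Kx x / 55 + 55)" by algebra
    ultimately have P: "T*(960*x*(x^2+4)) - (17/12)*(Kx x * T) - (3/5)*(100*T*(x+2)^2) - 48*x*T*(Kx x / 55 + 55) > 0"
      by simp
    have E2: "E = T*(960*x*(x^2+4)) - S^2 - S*(960*x*T) - S*u" unfolding E_def by (simp add: algebra_simps)
    show ?thesis unfolding E2 using C Sub P SK uK by linarith
  next
    case False
    have "u \<le> 0" unfolding u_def using False x0 power_mono[of x 2 2] by simp
    then have Sub: "S*u \<le> 0" using S0 by (simp add: mult_nonneg_nonpos)
    have C: "S*(960*x*T) \<le> 48*x*T*(Kx x / 40 + 40)" using S960[of 40] by simp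
    have "T * (960*x*(x^2+4) - Kx x - 48*x*(Kx x/40 + 40)) > 0"
      using P4_pos[OF wf(1)] False T0 by simp
    moreover have "T * (960*x*(x^2+4) - Kx x - 48*x*(Kx x/40 + 40)) =
       T*(960*x*(x^2+4)) - (Kx x * T) - 48*x*T*(Kx x / 40 + 40)" by algebra
    ultimately have P: "T*(960*x*(x^2+4)) - (Kx x * T) - 48*x*T*(Kx x / 40 + 40) > 0"
      by simp
    have E2: "E = T*(960*x*(x^2+4)) - S^2 - S*(960*x*T) - S*u" unfolding E_def by (simp add: algebra_simps)
    show ?thesis unfolding E2 using C Sub P SK by linarith
  qed
  have "S*(S+u) < 240*x*(v - 4*T)*(S + u)" using Eid Epos by linarith
  then have main: "S < 240*x*(v - 4*T)" using Su by simp
  define P where "P = (1+4*y^2)*ww x y (-S) + 4*y^2"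
  have Pn: "P \<le> 0" using b unfolding P_def by simp
  have nP: "-P \<ge> v - 4*T" unfolding P_def v_def T_def using v0 unfolding v_def
    by (simp add: algebra_simps mult_nonneg_nonpos)
  have h1: "1 \<le> 1 - ww x y (-S)" using v0 unfolding v_def by simp
  have h3: "1 * (v - 4*T) \<le> (1 - ww x y (-S)) * (-P)"
  proof -
    have "1 * (v - 4*T) \<le> 1 * (-P)" using nP by simp
    also have "\<dots> \<le> (1 - ww x y (-S)) * (-P)" by (rule mult_right_mono[OF h1]) (use Pn in linarith)
    finally show ?thesis .
  qed
  have h4: "2*x*(1 * (v - 4*T)) \<le> 2*x*((1 - ww x y (-S)) * (-P))"
    by (rule mult_left_mono[OF h3]) (use x0 in linarith)
  have "2*x*(v - 4*T) = 2*x*(1 * (v - 4*T))" by simp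
  also have "\<dots> \<le> 2*x*((1 - ww x y (-S)) * (-P))" by (rule h4)
  also have "\<dots> = 2*x*(1 - ww x y (-S)) * (-P)" by (rule mult.assoc[symmetric])
  finally have h5: "2*x*(v - 4*T) \<le> 2*x*(1 - ww x y (-S)) * (-P)" .
  have "2*x*(v - 4*T)/S \<le> 2*x*(1 - ww x y (-S)) * (-P)/S"
    by (rule divide_right_mono[OF h5]) (use S0 in linarith)
  also have "\<dots> = Gx x y (-S)" unfolding Gx_alt P_def[symmetric] by simp
  finally have G: "2*x*(v - 4*T)/S \<le> Gx x y (-S)" .
  have "1/120 < 2*x*(v - 4*T)/S" using main S0 by (simp add: field_simps)
  then have "1/120 < Gx x y (-S)" using G by linarith
  then show ?thesis unfolding S_def .
qed

theorem lemma4p2: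
  shows "(\<exists>M. \<forall>(x, y) \<in> regR - {p0}.
            \<bar>partial_x omega_p x y\<bar> \<le> M \<and> \<bar>partial_y omega_p x y\<bar> \<le> M \<and>
            \<bar>partial_x omega_m x y\<bar> \<le> M \<and> \<bar>partial_y omega_m x y\<bar> \<le> M)
    \<and> (\<forall>(x, y) \<in> regR_plus - {p0}.
            partial_x omega_p x y \<ge> 0 \<and> (partial_x omega_p x y = 0 \<longleftrightarrow> y = 0))
    \<and> (\<forall>(x, y) \<in> regR_minus - {p0}.
            partial_x omega_m x y \<ge> 0 \<and> (partial_x omega_m x y = 0 \<longleftrightarrow> y = 0))
    \<and> (\<forall>a. 0 < a \<and> a \<le> 1/10 \<longrightarrow> (\<forall>(x, y) \<in> wedge a - {p0}.
            partial_x omega_p x y > 1/120 \<and> partial_x omega_m x y > 1/120))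
    \<and> (\<forall>x y. x > 0 \<and> y \<noteq> 0 \<longrightarrow>
            y * partial_y omega_p x y > 0 \<and> y * partial_y omega_m x y < 0)"
proof (intro conjI)
  show "\<exists>M. \<forall>(x, y) \<in> regR - {p0}.
            \<bar>partial_x omega_p x y\<bar> \<le> M \<and> \<bar>partial_y omega_p x y\<bar> \<le> M \<and>
            \<bar>partial_x omega_m x y\<bar> \<le> M \<and> \<bar>partial_y omega_m x y\<bar> \<le> M"
  proof (rule exI[of _ 8], rule ballI)
    fix p assume hp: "p \<in> regR - {p0}"
    obtain x y where pxy: "p = (x, y)" by (cases p)
    have h: "(x, y) \<in> regR" "(x, y) \<notin> {p0}" using hp pxy by auto
    have x0: "x > 0" and R: "4 - 4*y^2 - x^2*y^2 - 8*x^2*y^4 \<ge> 0" using h(1) unfolding regR_def by auto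
    have xy: "(x,y) \<noteq> (2,0)" using h(2) unfolding p0_def by simp
    have "0 \<le> x^2*y^2" "0 \<le> 8*x^2*y^4" by simp_all
    then have t1: "y^2 \<le> 1" using R by linarith
    have b1: "\<bar>Gx x y (1 * sqrt (Delta x y))\<bar> \<le> 8 \<and> \<bar>Gy x y (1 * sqrt (Delta x y))\<bar> \<le> 3"
      by (rule bounds[OF x0 xy t1]) simp
    have b2: "\<bar>Gx x y ((-1) * sqrt (Delta x y))\<bar> \<le> 8 \<and> \<bar>Gy x y ((-1) * sqrt (Delta x y))\<bar> \<le> 3"
      by (rule bounds[OF x0 xy t1]) simp
    have "\<bar>partial_x omega_p x y\<bar> \<le> 8 \<and> \<bar>partial_y omega_p x y\<bar> \<le> 8 \<and>
            \<bar>partial_x omega_m x y\<bar> \<le> 8 \<and> \<bar>partial_y omega_m x y\<bar> \<le> 8"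
      unfolding px_p[OF x0 xy] py_p[OF x0 xy] px_m[OF x0 xy] py_m[OF x0 xy] using b1 b2 by simp
    then show "case p of (x, y) \<Rightarrow> \<bar>partial_x omega_p x y\<bar> \<le> 8 \<and> \<bar>partial_y omega_p x y\<bar> \<le> 8 \<and>
            \<bar>partial_x omega_m x y\<bar> \<le> 8 \<and> \<bar>partial_y omega_m x y\<bar> \<le> 8" unfolding pxy by simp
  qed
  show "\<forall>(x, y) \<in> regR_plus - {p0}.
            partial_x omega_p x y \<ge> 0 \<and> (partial_x omega_p x y = 0 \<longleftrightarrow> y = 0)"
  proof (rule ballI)
    fix p assume hp: "p \<in> regR_plus - {p0}"
    obtain x y where pxy: "p = (x, y)" by (cases p)
    have h: "(x, y) \<in> regR_plus" "(x, y) \<notin> {p0}" using hp pxy by auto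
    have x0: "x > 0" and x2: "x \<le> 2" using h(1) unfolding regR_plus_def regR_def by auto
    have xy: "(x,y) \<noteq> (2,0)" using h(2) unfolding p0_def by simp
    have "partial_x omega_p x y \<ge> 0 \<and> (partial_x omega_p x y = 0 \<longleftrightarrow> y = 0)"
      unfolding px_p[OF x0 xy] using sign_p[OF x0 x2 xy] .
    then show "case p of (x, y) \<Rightarrow> partial_x omega_p x y \<ge> 0 \<and> (partial_x omega_p x y = 0 \<longleftrightarrow> y = 0)"
      unfolding pxy by simp
  qed
  show "\<forall>(x, y) \<in> regR_minus - {p0}.
            partial_x omega_m x y \<ge> 0 \<and> (partial_x omega_m x y = 0 \<longleftrightarrow> y = 0)"
  proof (rule ballI)
    fix p assume hp: "p \<in> regR_minus - {p0}"
    obtain x y where pxy: "p = (x, y)" by (cases p)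
    have h: "(x, y) \<in> regR_minus" "(x, y) \<notin> {p0}" using hp pxy by auto
    have x0: "x > 0" and x2: "x \<ge> 2" using h(1) unfolding regR_minus_def regR_def by auto
    have xy: "(x,y) \<noteq> (2,0)" using h(2) unfolding p0_def by simp
    have "partial_x omega_m x y \<ge> 0 \<and> (partial_x omega_m x y = 0 \<longleftrightarrow> y = 0)"
      unfolding px_m[OF x0 xy] using sign_m[OF x2 xy] .
    then show "case p of (x, y) \<Rightarrow> partial_x omega_m x y \<ge> 0 \<and> (partial_x omega_m x y = 0 \<longleftrightarrow> y = 0)"
      unfolding pxy by simp
  qed
  show "\<forall>a. 0 < a \<and> a \<le> 1/10 \<longrightarrow> (\<forall>(x, y) \<in> wedge a - {p0}.
            partial_x omega_p x y > 1/120 \<and> partial_x omega_m x y > 1/120)"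
  proof (intro allI impI ballI)
    fix a p assume a': "0 < a \<and> a \<le> 1/10" and hp: "p \<in> wedge a - {p0}"
    obtain x y where pxy: "p = (x, y)" by (cases p)
    have a: "0 < a" "a \<le> 1/10" using a' by auto
    have h: "(x, y) \<in> wedge a" "(x, y) \<notin> {p0}" using hp pxy by auto
    have w1: "\<bar>y\<bar> \<le> a" and w2: "\<bar>y\<bar> \<ge> \<bar>x - 2\<bar> / 10" using h(1) unfolding wedge_def by auto
    have y1: "\<bar>y\<bar> \<le> 1/10" using w1 a by linarith
    have y2: "\<bar>x-2\<bar> \<le> 10*\<bar>y\<bar>" using w2 by (simp add: divide_le_eq mult.commute)
    have y0: "y \<noteq> 0"
    proof
      assume "y = 0"
      then have "x = 2" using y2 by simp
      then show False using h(2) \<open>y = 0\<close> unfolding p0_def by simp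
    qed
    have x0: "x > 0" using wedge_facts(1)[OF y0 y1 y2] by simp
    have xy: "(x,y) \<noteq> (2,0)" using y0 by simp
    have "partial_x omega_p x y > 1/120 \<and> partial_x omega_m x y > 1/120"
      unfolding px_p[OF x0 xy] px_m[OF x0 xy] using wedge_p[OF y0 y1 y2] wedge_m[OF y0 y1 y2] by simp
    then show "case p of (x, y) \<Rightarrow> partial_x omega_p x y > 1/120 \<and> partial_x omega_m x y > 1/120"
      unfolding pxy by simp
  qed
  show "\<forall>x y. x > 0 \<and> y \<noteq> 0 \<longrightarrow>
            y * partial_y omega_p x y > 0 \<and> y * partial_y omega_m x y < 0"
  proof (intro allI impI)
    fix x y :: real assume h: "x > 0 \<and> y \<noteq> 0"
    then have x0: "x > 0" and y0: "y \<noteq> 0" by auto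
    have xy: "(x,y) \<noteq> (2,0)" using y0 by simp
    show "y * partial_y omega_p x y > 0 \<and> y * partial_y omega_m x y < 0"
      unfolding py_p[OF x0 xy] py_m[OF x0 xy] using ysign[OF x0 y0] .
  qed
qed

end
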